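(* Let $s$ be an integer with $3\le s\le 8$, and let $P(z)=1+\sum_{k=1}^s a_kz^k$ with real coefficients. Suppose that $P^{(k)}(-2s)\ge 0$ for all $k=0,1,\dots,s$, and that \[ \frac12\left(a_1^2-\frac{(1-a_1)^2}{s}\right)\ge a_2. \] Then $P(z)=\left(1+\frac{z}{2s}\right)^s$. *)

theory Defs
  imports "HOL-Computational_Algebra.Polynomial"
begin

end

theory Submission
  imports Defs
begin

lemma coeff_lin_pow: "coeff ([:a, 1:] ^ n) i = of_nat (n choose i) * (a::real) ^ (n - i)"
proof (cases "i \<le> n")
  case True then show ?thesis by (simp add: coeff_linear_poly_power)
next
  case False
  then have "coeff ([:a, 1:] ^ n) i = 0"
    by (intro coeff_eq_0) (simp add: degree_linear_power)
  then show ?thesis using False by simp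
qed

lemma pcompose_X_pow: "pcompose ([:0, 1:] ^ n) (q::real poly) = q ^ n"
  by (induction n) (simp_all add: pcompose_mult pcompose_pCons pcompose_1)

lemma higher_pderiv_pcompose_lin:
  "(pderiv ^^ k) (pcompose p [:a, 1:]) = pcompose ((pderiv ^^ k) p) [:a, 1::real:]"
  by (induction k) (simp_all add: pderiv_pcompose pderiv_pCons)

lemma choose2_real: "2 * real (k choose 2) = real k * real k - real k"
proof -
  have "even (k * (k - 1))" by (cases "even k") auto
  then have "2 * (k choose 2) = k * (k - 1)" by (simp add: choose_two)
  then have "2 * real (k choose 2) = real (k * (k - 1))" by (metis of_nat_mult of_nat_numeral)
  then show ?thesis by (cases k) (auto simp: algebra_simps)
qed

theorem lemma2p5:
  fixes s :: nat and P :: "real poly"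
  assumes "3 \<le> s" and "s \<le> 8"
    and "degree P \<le> s" and "coeff P 0 = 1"
    and "\<forall>k \<le> s. poly ((pderiv ^^ k) P) (- 2 * real s) \<ge> 0"
    and "(1/2) * ((coeff P 1)^2 - (1 - coeff P 1)^2 / real s) \<ge> coeff P 2"
  shows "P = [:1, 1 / (2 * real s):] ^ s"
proof -
  define t where "t = 2 * real s"
  have tpos: "t > 0" using assms(1) by (simp add: t_def)
  have spos: "real s > 0" using assms(1) by simp
  define Q where "Q = pcompose P [:-t, 1:]"
  have PQ: "P = pcompose Q [:t, 1:]"
    unfolding Q_def by (simp add: pcompose_assoc[symmetric] pcompose_pCons)
  have degQ: "degree Q \<le> s" using assms(3) by (simp add: Q_def degree_pcompose)
  define q where "q k = coeff Q k" for k
  have qnn: "q k \<ge> 0" if "k \<le> s" for k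
  proof -
    have "poly ((pderiv ^^ k) P) (-t) = poly ((pderiv ^^ k) Q) 0"
      by (simp add: Q_def higher_pderiv_pcompose_lin poly_pcompose)
    also have "\<dots> = fact k * q k"
      by (simp add: poly_0_coeff_0 coeff_higher_pderiv q_def pochhammer_fact)
    finally have "fact k * q k \<ge> 0" using assms(5) that by (auto simp: t_def)
    then show ?thesis using fact_gt_zero[of k, where 'a=real] by (simp add: zero_le_mult_iff)
  qed
  have Psum: "P = (\<Sum>k\<le>s. smult (q k) ([:t, 1:] ^ k))"
  proof -
    have "P = pcompose (\<Sum>k\<le>s. monom (q k) k) [:t, 1:]"
      using PQ poly_as_sum_of_monoms'[OF degQ] by (simp add: q_def)
    also have "\<dots> = (\<Sum>k\<le>s. smult (q k) ([:t, 1:] ^ k))"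
      by (simp add: pcompose_sum monom_altdef pcompose_smult pcompose_X_pow)
    finally show ?thesis .
  qed
  have cP: "coeff P j = (\<Sum>k\<le>s. q k * (real (k choose j) * t ^ (k - j)))" for j
    by (subst Psum) (simp add: coeff_sum coeff_lin_pow)
  define c where "c k = q k * t ^ k" for k
  have cnn: "c k \<ge> 0" if "k \<le> s" for k using qnn[OF that] tpos by (simp add: c_def)
  define S1 where "S1 = (\<Sum>k\<le>s. real k * c k)"
  define S2 where "S2 = (\<Sum>k\<le>s. real k * real k * c k)"
  have S0: "(\<Sum>k\<le>s. c k) = 1"
    using assms(4) cP[of 0] by (simp add: c_def)
  have a1: "coeff P 1 = S1 / t"
  proof -
    have "coeff P 1 = (\<Sum>k\<le>s. real k * c k / t)"
      unfolding cP
    proof (rule sum.cong)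
      fix k assume "k \<in> {..s}"
      show "q k * (real (k choose 1) * t ^ (k - 1)) = real k * c k / t"
        using tpos by (cases k) (simp_all add: c_def)
    qed simp
    then show ?thesis by (simp add: S1_def sum_divide_distrib)
  qed
  have a2: "coeff P 2 = (S2 - S1) / (2 * t^2)"
  proof -
    have "coeff P 2 = (\<Sum>k\<le>s. (real k * real k * c k - real k * c k) / (2 * t^2))"
      unfolding cP
    proof (rule sum.cong)
      fix k assume "k \<in> {..s}"
      have e: "real (k choose 2) = (real k * real k - real k) / 2" using choose2_real[of k] by simp
      show "q k * (real (k choose 2) * t ^ (k - 2)) = (real k * real k * c k - real k * c k) / (2 * t^2)"
      proof (cases "k \<ge> 2")
        case True
        then have "t ^ k = t ^ (k - 2) * t^2" by (metis le_add_diff_inverse2 power_add)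
        then show ?thesis using tpos unfolding e c_def by (simp add: field_simps)
      next
        case False
        then have "k = 0 \<or> k = 1" by auto
        then show ?thesis by (auto simp: c_def)
      qed
    qed simp
    then show ?thesis
      by (simp add: S1_def S2_def sum_divide_distrib[symmetric] sum_subtractf)
  qed
  have var: "S2 \<ge> S1 ^ 2"
  proof -
    have "0 \<le> (\<Sum>k\<le>s. (real k - S1)^2 * c k)"
      by (intro sum_nonneg) (simp add: cnn)
    also have "\<dots> = S2 - 2 * S1 * S1 + S1^2 * (\<Sum>k\<le>s. c k)"
    proof -
      have "(\<Sum>k\<le>s. (real k - S1)^2 * c k)
          = (\<Sum>k\<le>s. real k * real k * c k - 2 * S1 * (real k * c k) + S1^2 * c k)"
        by (rule sum.cong) (simp_all add: power2_eq_square algebra_simps)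
      also have "\<dots> = S2 - 2 * S1 * S1 + S1^2 * (\<Sum>k\<le>s. c k)"
        unfolding sum.distrib sum_subtractf sum_distrib_left[symmetric]
        by (simp add: S1_def S2_def)
      finally show ?thesis .
    qed
    finally show ?thesis using S0 by (simp add: power2_eq_square)
  qed
  have ineq: "S1^2 - (t - S1)^2 / real s \<ge> S2 - S1"
  proof -
    have "(1/2) * ((S1/t)^2 - (1 - S1/t)^2 / real s) \<ge> (S2 - S1) / (2 * t^2)"
      using assms(6) a1 a2 by simp
    then have "2 * t^2 * ((1/2) * ((S1/t)^2 - (1 - S1/t)^2 / real s)) \<ge> S2 - S1"
      using tpos by (simp add: field_simps)
    moreover have "2 * t^2 * ((1/2) * ((S1/t)^2 - (1 - S1/t)^2 / real s))
        = S1^2 - (t - S1)^2 / real s"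
      using tpos spos by (simp add: field_simps power2_eq_square)
    ultimately show ?thesis by simp
  qed
  have S1le: "S1 \<le> real s"
  proof -
    have "S1 \<le> (\<Sum>k\<le>s. real s * c k)"
      unfolding S1_def by (intro sum_mono mult_right_mono) (auto simp: cnn)
    then show ?thesis using S0 by (simp add: sum_distrib_left[symmetric])
  qed
  have "(t - S1)^2 \<le> real s * S1"
  proof -
    have "(t - S1)^2 / real s \<le> S1" using ineq var by simp
    then show ?thesis using spos by (simp add: field_simps)
  qed
  then have "(real s - S1) * (4 * real s - S1) \<le> 0"
    by (simp add: t_def power2_eq_square algebra_simps)
  moreover have "4 * real s - S1 > 0" using S1le spos by simp
  ultimately have "real s - S1 \<le> 0" by (simp add: mult_le_0_iff)
  then have S1s: "S1 = real s" using S1le by simp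
  have "(\<Sum>k\<le>s. (real s - real k) * c k) = 0"
    using S0 S1s by (simp add: S1_def algebra_simps sum_subtractf sum_distrib_left[symmetric])
  then have z: "\<forall>k\<in>{..s}. (real s - real k) * c k = 0"
    by (subst (asm) sum_nonneg_eq_0_iff) (auto simp: cnn)
  have ck0: "c k = 0" if "k < s" for k
    using z[rule_format, of k] that by simp
  have qk0: "q k = 0" if "k < s" for k using ck0[OF that] tpos by (simp add: c_def)
  have "(\<Sum>k\<le>s. c k) = (\<Sum>k\<in>{s}. c k)"
    by (rule sum.mono_neutral_right) (auto simp: ck0)
  then have "c s = 1" using S0 by simp
  then have qs: "q s = 1 / t ^ s" using tpos by (simp add: c_def field_simps)
  have "P = (\<Sum>k\<in>{s}. smult (q k) ([:t, 1:] ^ k))"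
    unfolding Psum
    by (rule sum.mono_neutral_right) (auto simp: qk0)
  also have "\<dots> = smult (q s) ([:t, 1:] ^ s)" by simp
  also have "\<dots> = smult ((1/t) ^ s) ([:t, 1:] ^ s)" by (simp add: qs power_one_over)
  also have "\<dots> = (smult (1/t) [:t, 1:]) ^ s" by (rule smult_power[symmetric])
  also have "smult (1/t) [:t, 1:] = [:1, 1 / (2 * real s):]" using tpos by (simp add: t_def)
  finally show ?thesis .
qed

end
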